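(* Let $d\in\{3,4,5\}$. There exists $\delta>0$ such that for all $(\alpha,p)\in\Omega_{d,\delta}:=[d-2-\delta,d-2+\delta]\times[2,2+\delta]$ and all $u\in\mathbb{X}_d$, the operators $V_{u,\alpha,p}$ and $\mathcal{A}_{u,\alpha,p}$ are bounded linear operators from $\mathbb{X}_d$ to $L^2_{rad}(\mathbb{R}^d)$.
   Context: $\mathbb{X}_d:=L^2_{rad}(\mathbb{R}^d)\cap L^{10}_{rad}(\mathbb{R}^d)$ (radial functions) with norm $\|u\|_{L^2}+\|u\|_{L^{10}}$. $V_{u,\alpha,p}$ is the multiplication operator by the function $(|\cdot|^{-\alpha}*|u|^p)|u|^{p-2}$, and $\mathcal{A}_{u,\alpha,p}\xi:=\big(|\cdot|^{-\alpha}*(|u|^{p-2}u\xi)\big)|u|^{p-2}u$. *)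

theory Defs
  imports "HOL-Analysis.Analysis"
begin

text \<open>Functions on R^d are modelled as real-valued functions on real^'n (d = CARD('n)),
  with Lebesgue measure. Membership in function spaces is up to a.e. equality.\<close>

definition radial_ae :: "('a::euclidean_space \<Rightarrow> real) \<Rightarrow> bool" where
  "radial_ae f \<longleftrightarrow> (\<exists>g. (\<forall>x y. norm x = norm y \<longrightarrow> g x = g y) \<and>
                        (AE x in lebesgue. f x = g x))"

definition memLp :: "real \<Rightarrow> ('a::euclidean_space \<Rightarrow> real) \<Rightarrow> bool" where
  "memLp q f \<longleftrightarrow> f \<in> borel_measurable lebesgue \<and> integrable lebesgue (\<lambda>x. \<bar>f x\<bar> powr q)"

definition Lp_norm :: "real \<Rightarrow> ('a::euclidean_space \<Rightarrow> real) \<Rightarrow> real" where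
  "Lp_norm q f = (LINT x|lebesgue. \<bar>f x\<bar> powr q) powr (1 / q)"

definition L2rad :: "('a::euclidean_space \<Rightarrow> real) set" where
  "L2rad = {f. memLp 2 f \<and> radial_ae f}"

definition Xd :: "('a::euclidean_space \<Rightarrow> real) set" where
  "Xd = {f. memLp 2 f \<and> memLp 10 f \<and> radial_ae f}"

definition Xnorm :: "('a::euclidean_space \<Rightarrow> real) \<Rightarrow> real" where
  "Xnorm f = Lp_norm 2 f + Lp_norm 10 f"

text \<open>|t|^a with the convention |t|^0 = 1 (also at t = 0).\<close>
definition abspow :: "real \<Rightarrow> real \<Rightarrow> real" where
  "abspow t a = (if a = 0 then 1 else \<bar>t\<bar> powr a)"

definition rconv :: "real \<Rightarrow> ('a::euclidean_space \<Rightarrow> real) \<Rightarrow> 'a \<Rightarrow> real" where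
  "rconv \<alpha> f x = (LINT y|lebesgue. norm (x - y) powr (- \<alpha>) * f y)"

definition V_op :: "('a::euclidean_space \<Rightarrow> real) \<Rightarrow> real \<Rightarrow> real \<Rightarrow> ('a \<Rightarrow> real) \<Rightarrow> 'a \<Rightarrow> real" where
  "V_op u \<alpha> p \<xi> x = rconv \<alpha> (\<lambda>y. abspow (u y) p) x * abspow (u x) (p - 2) * \<xi> x"

definition A_op :: "('a::euclidean_space \<Rightarrow> real) \<Rightarrow> real \<Rightarrow> real \<Rightarrow> ('a \<Rightarrow> real) \<Rightarrow> 'a \<Rightarrow> real" where
  "A_op u \<alpha> p \<xi> x = rconv \<alpha> (\<lambda>y. abspow (u y) (p - 2) * u y * \<xi> y) x * (abspow (u x) (p - 2) * u x)"

definition bounded_linear_X_L2rad :: "(('a::euclidean_space \<Rightarrow> real) \<Rightarrow> ('a \<Rightarrow> real)) \<Rightarrow> bool" where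
  "bounded_linear_X_L2rad T \<longleftrightarrow>
     (\<forall>\<xi>\<in>Xd. T \<xi> \<in> L2rad) \<and>
     (\<forall>\<xi>\<in>Xd. \<forall>\<eta>\<in>Xd. \<forall>a b::real.
        AE x in lebesgue. T (\<lambda>y. a * \<xi> y + b * \<eta> y) x = a * T \<xi> x + b * T \<eta> x) \<and>
     (\<exists>C. \<forall>\<xi>\<in>Xd. Lp_norm 2 (T \<xi>) \<le> C * Xnorm \<xi>)"

end

theory Submission
  imports Defs
begin

lemma meas_lin: fixes f :: "'a::euclidean_space \<Rightarrow> 'b::euclidean_space"
  assumes "linear f" shows "f \<in> borel_measurable borel"
  by (intro borel_measurable_continuous_onI linear_continuous_on) (use assms linear_conv_bounded_linear in auto)

lemma lborel_orth_wo:
  fixes Q :: "real^'m::{finite,wellorder} \<Rightarrow> real^'m::_"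
  assumes Q: "orthogonal_transformation Q"
  shows "distr lborel borel Q = lborel"
proof (rule lborel_eqI[symmetric])
  have lin: "linear Q" using Q orthogonal_transformation_linear by blast
  have mQ: "Q \<in> borel_measurable borel" by (rule meas_lin[OF lin])
  fix l u :: "real^'m::_" assume le: "\<And>b. b \<in> Basis \<Longrightarrow> l \<bullet> b \<le> u \<bullet> b"
  have bij: "bij Q" using Q orthogonal_transformation_bij by blast
  have eq: "Q -` box l u = inv Q ` box l u" using bij bij_vimage_eq_inv_image by blast
  have Qi: "orthogonal_transformation (inv Q)" using Q orthogonal_transformation_inv by blast
  have op: "open (Q -` box l u)"
    using open_vimage[OF open_box, of Q] linear_continuous_on[of Q] lin linear_conv_bounded_linear by blast
  have lm: "inv Q ` box l u \<in> lmeasurable"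
    by (rule measurable_orthogonal_image[OF Qi]) simp
  have "emeasure (distr lborel borel Q) (box l u) = emeasure lborel (Q -` box l u)"
    using mQ by (subst emeasure_distr) auto
  also have "\<dots> = emeasure lebesgue (Q -` box l u)"
    using op by simp
  also have "\<dots> = ennreal (measure lebesgue (inv Q ` box l u))"
    using lm eq by (simp add: emeasure_eq_measure2)
  also have "\<dots> = ennreal (measure lebesgue (box l u))"
    using measure_orthogonal_image[OF Qi, of "box l u"] by simp
  also have "\<dots> = emeasure lebesgue (box l u)"
    by (simp add: emeasure_eq_measure2)
  also have "\<dots> = ennreal (\<Prod>b\<in>Basis. (u - l) \<bullet> b)"
    using emeasure_lborel_box[OF le] by simp
  finally show "emeasure (distr lborel borel Q) (box l u) = (\<Prod>b\<in>Basis. (u - l) \<bullet> b)" .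
qed simp

lemma Basis_cart_range: "(Basis :: (real^'n) set) = range (\<lambda>i. axis i 1)"
  by (auto simp: Basis_vec_def)

lemma prod_Basis_cart: "(\<Prod>b\<in>Basis. (x::real^'n) \<bullet> b) = (\<Prod>i\<in>UNIV. x $ i)"
proof -
  have inj: "inj (\<lambda>i::'n. axis i (1::real))" by (auto intro: injI simp: axis_eq_axis)
  show ?thesis unfolding Basis_cart_range
    by (subst prod.reindex[OF inj]) (simp add: inner_axis)
qed

lemma linear_perm: "linear (\<lambda>y::real^'n. (\<chi> i. y $ \<sigma> i) :: real^'m)"
  by (auto simp: linear_iff vec_eq_iff)

lemma lborel_perm:
  fixes \<sigma> :: "'m::finite \<Rightarrow> 'n::finite"
  assumes bij: "bij \<sigma>"
  shows "distr lborel borel (\<lambda>y::real^'n. (\<chi> i. y $ \<sigma> i) :: real^'m) = lborel"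
proof (rule lborel_eqI[symmetric])
  let ?P = "\<lambda>y::real^'n. (\<chi> i. y $ \<sigma> i) :: real^'m"
  have mP: "?P \<in> borel_measurable borel" by (rule meas_lin[OF linear_perm])
  fix l u :: "real^'m" assume le: "\<And>b. b \<in> Basis \<Longrightarrow> l \<bullet> b \<le> u \<bullet> b"
  have le': "l $ i \<le> u $ i" for i using le[of "axis i 1"] by (auto simp: Basis_cart_range inner_axis)
  let ?l = "(\<chi> j. l $ inv \<sigma> j) :: real^'n" and ?u = "(\<chi> j. u $ inv \<sigma> j) :: real^'n"
  have eq: "?P -` box l u = box ?l ?u"
  proof -
    have "(\<forall>i. l $ i < y $ \<sigma> i \<and> y $ \<sigma> i < u $ i) \<longleftrightarrow> (\<forall>j. l $ inv \<sigma> j < y $ j \<and> y $ j < u $ inv \<sigma> j)" for y :: "real^'n"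
      using bij by (metis bij_inv_eq_iff)
    then show ?thesis by (auto simp: mem_box_cart)
  qed
  have le2: "\<And>b. b \<in> Basis \<Longrightarrow> ?l \<bullet> b \<le> ?u \<bullet> b"
    using le' by (auto simp: Basis_cart_range inner_axis)
  have "emeasure (distr lborel borel ?P) (box l u) = emeasure lborel (?P -` box l u)"
    using mP by (subst emeasure_distr) auto
  also have "\<dots> = ennreal (\<Prod>b\<in>Basis. (?u - ?l) \<bullet> b)"
    unfolding eq by (rule emeasure_lborel_box[OF le2])
  also have "(\<Prod>b\<in>Basis. (?u - ?l) \<bullet> b) = (\<Prod>j\<in>UNIV. u $ inv \<sigma> j - l $ inv \<sigma> j)"
    by (simp add: prod_Basis_cart)
  also have "\<dots> = (\<Prod>i\<in>UNIV. u $ i - l $ i)"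
  proof -
    have b: "bij_betw (inv \<sigma>) UNIV UNIV" using bij bij_betw_inv_into bij_def by blast
    show ?thesis using prod.reindex_bij_betw[OF b, of "\<lambda>i. u $ i - l $ i"] by simp
  qed
  also have "\<dots> = (\<Prod>b\<in>Basis. (u - l) \<bullet> b)" by (simp add: prod_Basis_cart)
  finally show "emeasure (distr lborel borel ?P) (box l u) = (\<Prod>b\<in>Basis. (u - l) \<bullet> b)" .
qed simp

lemma norm_perm:
  fixes \<sigma> :: "'m::finite \<Rightarrow> 'n::finite"
  assumes bij: "bij \<sigma>"
  shows "norm ((\<chi> i. y $ \<sigma> i) :: real^'m) = norm (y::real^'n)"
proof -
  have b: "bij_betw \<sigma> UNIV UNIV" using bij by (simp add: bij_def)
  show ?thesis unfolding norm_vec_def L2_set_def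
    using sum.reindex_bij_betw[OF b, of "\<lambda>j. (norm (y $ j))\<^sup>2"] by simp
qed

lemma lborel_orth_gen:
  fixes Q :: "real^'n \<Rightarrow> real^'n"
  assumes Q: "orthogonal_transformation Q" and card: "CARD('m::{finite,wellorder}) = CARD('n)"
  shows "distr lborel borel Q = lborel"
proof -
  obtain \<sigma> :: "'m \<Rightarrow> 'n" where b: "bij_betw \<sigma> UNIV UNIV"
    using finite_same_card_bij[of "UNIV::'m set" "UNIV::'n set"] card by auto
  then have bij: "bij \<sigma>" by (simp add: bij_def)
  have bij2: "bij (inv \<sigma>)" using bij by (simp add: bij_imp_bij_inv)
  define P where "P = (\<lambda>y::real^'n. (\<chi> i. y $ \<sigma> i) :: real^'m::_)"
  define Pi where "Pi = (\<lambda>z::real^'m::_. (\<chi> j. z $ inv \<sigma> j) :: real^'n)"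
  have PiP: "Pi (P y) = y" for y
    using bij by (simp add: P_def Pi_def vec_eq_iff bij_is_surj surj_f_inv_f)
  define Q' where "Q' = (\<lambda>z. P (Q (Pi z)))"
  have linP: "linear P" unfolding P_def by (rule linear_perm)
  have linPi: "linear Pi" unfolding Pi_def by (rule linear_perm)
  have linQ: "linear Q" using Q orthogonal_transformation_linear by blast
  have nP: "norm (P y) = norm y" for y unfolding P_def by (rule norm_perm[OF bij])
  have nPi: "norm (Pi z) = norm z" for z unfolding Pi_def by (rule norm_perm[OF bij2])
  have "orthogonal_transformation Q'"
    unfolding orthogonal_transformation Q'_def
  proof
    show "linear (\<lambda>z. P (Q (Pi z)))"
      using linear_compose[OF linear_compose[OF linPi linQ] linP] by (simp add: o_def)
    show "\<forall>v. norm (P (Q (Pi v))) = norm v"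
      using nP nPi Q by (simp add: orthogonal_transformation)
  qed
  then have dQ': "distr lborel borel Q' = lborel" by (rule lborel_orth_wo)
  have dP: "distr lborel borel P = lborel" unfolding P_def by (rule lborel_perm[OF bij])
  have dPi: "distr lborel borel Pi = lborel" unfolding Pi_def by (rule lborel_perm[OF bij2])
  have mP: "P \<in> borel_measurable borel" by (rule meas_lin[OF linP])
  have mPi: "Pi \<in> borel_measurable borel" by (rule meas_lin[OF linPi])
  have mQ': "Q' \<in> borel_measurable borel"
    by (rule meas_lin) (use \<open>orthogonal_transformation Q'\<close> orthogonal_transformation_linear in blast)
  have QQ: "Q = Pi \<circ> (Q' \<circ> P)" by (auto simp: Q'_def PiP)
  have "distr lborel borel Q = distr (distr (distr lborel borel P) borel Q') borel Pi"
    unfolding QQ using mP mPi mQ'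
    by (simp add: distr_distr measurable_comp)
  also have "\<dots> = lborel" unfolding dP dQ' dPi ..
  finally show ?thesis .
qed

lemma lborel_orth:
  fixes Q :: "real^'n \<Rightarrow> real^'n"
  assumes Q: "orthogonal_transformation Q" and card: "CARD('n) \<in> {3,4,5}"
  shows "distr lborel borel Q = lborel"
proof -
  consider "CARD('n) = CARD(3)" | "CARD('n) = CARD(4)" | "CARD('n) = CARD(5)" using card by auto
  then show ?thesis
  proof cases
    case 1 show ?thesis by (rule lborel_orth_gen[where 'm=3, OF Q]) (use 1 in simp)
  next
    case 2 show ?thesis by (rule lborel_orth_gen[where 'm=4, OF Q]) (use 2 in simp)
  next
    case 3 show ?thesis by (rule lborel_orth_gen[where 'm=5, OF Q]) (use 3 in simp)
  qed
qed

lemma meas_normpowr[measurable]: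
  assumes "f \<in> M \<rightarrow>\<^sub>M borel"
  shows "(\<lambda>x. norm (f x :: 'a::euclidean_space) powr b) \<in> borel_measurable M"
  using assms by (intro powr_real_measurable) auto

lemma meas_ball[measurable]:
  assumes "f \<in> M \<rightarrow>\<^sub>M borel"
  shows "Measurable.pred M (\<lambda>x. (f x :: 'a::euclidean_space) \<in> ball c r)"
proof -
  have "Measurable.pred borel (\<lambda>x::'a. x \<in> ball c r)" by (simp add: pred_def)
  then show ?thesis using measurable_compose[OF assms] by blast
qed

lemma exists_dyadic:
  fixes r :: real assumes "0 < r" "r < 1"
  shows "\<exists>k::nat. (1/2)^(Suc k) \<le> r \<and> r < (1/2)^k"
proof -
  obtain n where n: "(1/2::real)^n < r" using real_arch_pow_inv[of r "1/2"] assms by auto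
  define N where "N = (LEAST n. (1/2::real)^n \<le> r)"
  have N1: "(1/2::real)^N \<le> r" unfolding N_def by (rule LeastI[of _ n]) (use n in simp)
  have N0: "N \<noteq> 0"
  proof
    assume "N = 0" then have "1 \<le> r" using N1 by simp
    with assms show False by simp
  qed
  then obtain k where k: "N = Suc k" using not0_implies_Suc by blast
  have "\<not> (1/2::real)^k \<le> r" using not_less_Least[of k "\<lambda>n. (1/2::real)^n \<le> r"] k N_def by simp
  then show ?thesis using N1 k by (auto intro!: exI[of _ k])
qed

lemma dyadic_bound:
  fixes r \<beta> :: real assumes "0 \<le> \<beta>" "(1/2)^(Suc k) \<le> r"
  shows "r powr (-\<beta>) \<le> 2 powr ((real k + 1) * \<beta>)"
proof -
  have pos: "0 < (1/2::real)^(Suc k)" by simp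
  have "r powr (-\<beta>) \<le> ((1/2)^(Suc k)) powr (-\<beta>)"
    by (rule powr_mono2') (use assms pos in auto)
  also have "((1/2::real)^(Suc k)) = 2 powr (- (real k + 1))"
  proof -
    have "2 powr (- (real k + 1)) = 1 / 2 powr (real k + 1)" by (rule powr_minus_divide)
    also have "2 powr (real k + 1) = 2 ^ Suc k" by (simp add: powr_add powr_realpow)
    finally show ?thesis by (simp add: power_one_over)
  qed
  also have "(2 powr (- (real k + 1))) powr (-\<beta>) = 2 powr ((real k + 1) * \<beta>)"
    unfolding powr_powr by (simp add: algebra_simps)
  finally show ?thesis .
qed

lemma sing_int:
  fixes \<beta> :: real assumes b0: "0 \<le> \<beta>" and bd: "\<beta> < DIM('a::euclidean_space)"
  shows "integrable lborel (\<lambda>z::'a. indicator (ball 0 1) z * norm z powr (-\<beta>))"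
proof (rule integrableI_bounded)
  define h where "h = (\<lambda>z::'a. indicator (ball 0 1) z * norm z powr (-\<beta>))"
  show "(\<lambda>z::'a. indicator (ball 0 1) z * norm z powr (-\<beta>)) \<in> borel_measurable lborel"
    by measurable
  define V where "V = unit_ball_vol (real DIM('a))"
  define c where "c = (\<lambda>k::nat. 2 powr ((real k + 1) * \<beta>))"
  have cpos: "c k > 0" for k unfolding c_def by simp
  have bnd: "ennreal (norm (h z)) \<le> (\<Sum>k. ennreal (c k) * indicator (ball 0 ((1/2)^k)) z)" for z
  proof (cases "z \<in> ball 0 1 \<and> z \<noteq> 0")
    case False
    then have "h z = 0" unfolding h_def by auto
    then show ?thesis by simp
  next
    case True
    then have r: "0 < norm z" "norm z < 1" by auto
    obtain k where k: "(1/2)^(Suc k) \<le> norm z" "norm z < (1/2)^k" using exists_dyadic[OF r] by auto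
    have "norm (h z) = norm z powr (-\<beta>)" using True unfolding h_def by simp
    also have "\<dots> \<le> c k" unfolding c_def by (rule dyadic_bound[OF b0 k(1)])
    finally have "ennreal (norm (h z)) \<le> ennreal (c k) * indicator (ball 0 ((1/2)^k)) z"
      using k by (simp add: ennreal_leI)
    also have "\<dots> \<le> (\<Sum>k. ennreal (c k) * indicator (ball 0 ((1/2)^k)) z)"
    proof -
      let ?F = "\<lambda>i. ennreal (c i) * indicator (ball 0 ((1/2)^i)) z"
      have "?F k \<le> (\<Sum>i<Suc k. ?F i)" by (rule member_le_sum) auto
      also have "\<dots> \<le> suminf ?F" by (rule sum_le_suminf) (auto simp: summableI)
      finally show ?thesis .
    qed
    finally show ?thesis .
  qed
  have "(\<integral>\<^sup>+z. ennreal (norm (h z)) \<partial>lborel) \<le> (\<integral>\<^sup>+z. (\<Sum>k. ennreal (c k) * indicator (ball (0::'a) ((1/2)^k)) z) \<partial>lborel)"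
    apply (rule nn_integral_mono) using bnd by blast
  also have "\<dots> = (\<Sum>k. \<integral>\<^sup>+z. ennreal (c k) * indicator (ball (0::'a) ((1/2)^k)) z \<partial>lborel)"
    by (rule nn_integral_suminf) measurable
  also have "\<dots> = (\<Sum>k. ennreal (c k) * emeasure lborel (ball (0::'a) ((1/2)^k)))"
    by (simp add: nn_integral_cmult_indicator)
  also have "\<dots> = (\<Sum>k. ennreal (2 powr \<beta> * V * (2 powr \<beta> / 2 ^ DIM('a))^k))"
  proof (rule suminf_cong)
    fix k
    have "c k * (V * ((1/2)^k)^DIM('a)) = 2 powr \<beta> * V * (2 powr \<beta> / 2 ^ DIM('a))^k"
    proof -
      have e: "(2 powr \<beta>)^k = 2 powr (\<beta> * real k)"
        by (simp add: powr_realpow[symmetric] powr_powr)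
      have "c k = 2 powr \<beta> * (2 powr \<beta>)^k"
        unfolding c_def e by (simp add: powr_add[symmetric] algebra_simps)
      moreover have "((1/2::real)^k)^DIM('a) = (1 / 2 ^ DIM('a))^k"
        by (simp add: power_mult[symmetric] mult.commute power_one_over)
      ultimately show ?thesis by (simp add: power_divide algebra_simps)
    qed
    then show "ennreal (c k) * emeasure lborel (ball (0::'a) ((1/2)^k)) = ennreal (2 powr \<beta> * V * (2 powr \<beta> / 2 ^ DIM('a))^k)"
      using cpos[of k] by (simp add: emeasure_ball V_def ennreal_mult[symmetric])
  qed
  also have "\<dots> = ennreal (\<Sum>k. 2 powr \<beta> * V * (2 powr \<beta> / 2 ^ DIM('a))^k)"
  proof (rule suminf_ennreal2)
    show "0 \<le> 2 powr \<beta> * V * (2 powr \<beta> / 2 ^ DIM('a))^k" for k unfolding V_def by simp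
    have "2 powr \<beta> < 2 powr (real DIM('a))" using bd by simp
    then have "2 powr \<beta> / 2 ^ DIM('a) < 1" by (simp add: powr_realpow)
    then show "summable (\<lambda>k. 2 powr \<beta> * V * (2 powr \<beta> / 2 ^ DIM('a))^k)"
      by (intro summable_mult summable_geometric) simp
  qed
  also have "\<dots> < \<infinity>" by simp
  finally show "(\<integral>\<^sup>+z. ennreal (norm (indicator (ball 0 1) z * norm (z::'a) powr (-\<beta>))) \<partial>lborel) < \<infinity>"
    unfolding h_def .
qed

lemma young_aux:
  fixes a b r q :: real
  assumes a: "0 < a" and b: "0 < b" and r: "0 < r" and q: "0 < q" and rq: "1/r + 1/q = 1"
    and le: "b powr q \<le> a powr r"
  shows "a * b \<le> a powr r"
proof -
  have "(b powr q) powr (1/q) \<le> (a powr r) powr (1/q)"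
    by (rule powr_mono2) (use le q in auto)
  then have bb: "b \<le> a powr (r/q)" using q b by (simp add: powr_powr)
  have "a * b \<le> a * a powr (r/q)" using bb a by simp
  also have "\<dots> = a powr (1 + r/q)" using a by (simp add: powr_add)
  also have "1 + r/q = r" using rq r q by (simp add: field_simps)
  finally show ?thesis .
qed

lemma young_max:
  fixes a b r q :: real
  assumes a: "0 \<le> a" and b: "0 \<le> b" and r: "0 < r" and q: "0 < q" and rq: "1/r + 1/q = 1"
  shows "a * b \<le> a powr r + b powr q"
proof (cases "a = 0 \<or> b = 0")
  case True then show ?thesis by auto
next
  case False
  then have a': "0 < a" and b': "0 < b" using a b by auto
  show ?thesis
  proof (cases "b powr q \<le> a powr r")
    case True
    then have "a * b \<le> a powr r" by (rule young_aux[OF a' b' r q rq])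
    then show ?thesis using powr_ge_zero[of b q] by linarith
  next
    case False
    have rq': "1/q + 1/r = 1" using rq by simp
    have "b * a \<le> b powr q" by (rule young_aux[OF b' a' q r rq']) (use False in simp)
    then have "a * b \<le> b powr q" by (simp add: mult.commute)
    then show ?thesis using powr_ge_zero[of a r] by linarith
  qed
qed

lemma kern_pt:
  fixes z :: "'a::euclidean_space" and f \<alpha> :: real
  assumes "0 < \<alpha>"
  shows "\<bar>norm z powr (-\<alpha>) * f\<bar> \<le> \<bar>f\<bar> + \<bar>f\<bar> powr 4 + indicator (ball 0 1) z * norm z powr (-(4/3*\<alpha>))"
proof -
  consider "z = 0" | "1 \<le> norm z" | "z \<noteq> 0" "norm z < 1" by fastforce
  then show ?thesis
  proof cases
    case 1 then show ?thesis by simp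
  next
    case 2
    have "norm z powr (-\<alpha>) \<le> norm z powr 0" by (rule powr_mono) (use 2 assms in auto)
    moreover have "z \<noteq> 0" using 2 by auto
    ultimately have "norm z powr (-\<alpha>) \<le> 1" by simp
    then have "\<bar>norm z powr (-\<alpha>) * f\<bar> \<le> \<bar>f\<bar>"
      by (simp add: abs_mult mult_left_le_one_le)
    moreover have "0 \<le> \<bar>f\<bar> powr 4 + indicator (ball 0 1) z * norm z powr (-(4/3*\<alpha>))" by simp
    ultimately show ?thesis by linarith
  next
    case 3
    have "\<bar>norm z powr (-\<alpha>) * f\<bar> = norm z powr (-\<alpha>) * \<bar>f\<bar>" by (simp add: abs_mult)
    also have "\<dots> \<le> (norm z powr (-\<alpha>)) powr (4/3) + \<bar>f\<bar> powr 4"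
      by (rule young_max) auto
    also have "(norm z powr (-\<alpha>)) powr (4/3) = norm z powr (-(4/3*\<alpha>))"
      unfolding powr_powr by (simp add: algebra_simps)
    finally show ?thesis using 3 by simp
  qed
qed

lemma lborel_reflect: "distr lborel borel (\<lambda>y. x - y) = (lborel :: 'a::euclidean_space measure)"
  using lborel_affine[of "-1::real" x] by (simp add: density_1)

lemma conv_basic:
  fixes F G :: "'a::euclidean_space \<Rightarrow> real"
  assumes \<alpha>: "0 < \<alpha>" "4/3*\<alpha> < DIM('a)"
    and F[measurable]: "F \<in> borel_measurable lborel" and G: "integrable lborel G"
    and dom: "AE y in lborel. \<bar>F y\<bar> + \<bar>F y\<bar> powr 4 \<le> G y"
  shows "integrable lborel (\<lambda>y. norm (x - y) powr (-\<alpha>) * F y)"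
    and "\<bar>\<integral>y. norm (x - y) powr (-\<alpha>) * F y \<partial>lborel\<bar> \<le> (\<integral>y. G y \<partial>lborel) + (\<integral>z. indicator (ball 0 1) z * norm (z::'a) powr (-(4/3*\<alpha>)) \<partial>lborel)"
proof -
  define h where "h = (\<lambda>z::'a. indicator (ball 0 1) z * norm z powr (-(4/3*\<alpha>)))"
  have hm[measurable]: "h \<in> borel_measurable borel" unfolding h_def by measurable
  have hi: "integrable lborel h" unfolding h_def by (rule sing_int) (use \<alpha> in auto)
  have Tm: "(\<lambda>y::'a. x - y) \<in> lborel \<rightarrow>\<^sub>M borel" by measurable
  have hx: "integrable lborel (\<lambda>y. h (x - y))"
    using integrable_distr_eq[OF Tm hm] hi lborel_reflect[of x] by simp
  have hxI: "(\<integral>y. h (x - y) \<partial>lborel) = (\<integral>z. h z \<partial>lborel)"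
    using integral_distr[OF Tm hm] lborel_reflect[of x] by simp
  have bound: "AE y in lborel. \<bar>norm (x - y) powr (-\<alpha>) * F y\<bar> \<le> G y + h (x - y)"
    using dom proof eventually_elim
    case (elim y) then show ?case
      using kern_pt[OF \<alpha>(1), of "x - y" "F y"] unfolding h_def by simp
  qed
  have Gnn: "AE y in lborel. 0 \<le> G y" using dom
    by eventually_elim (smt (verit) abs_ge_zero powr_ge_zero)
  have hnn: "0 \<le> h z" for z unfolding h_def by simp
  have sumi: "integrable lborel (\<lambda>y. G y + h (x - y))" using G hx by simp
  show I: "integrable lborel (\<lambda>y. norm (x - y) powr (-\<alpha>) * F y)"
  proof (rule Bochner_Integration.integrable_bound[OF sumi])
    show "(\<lambda>y. norm (x - y) powr (-\<alpha>) * F y) \<in> borel_measurable lborel" by measurable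
    show "AE y in lborel. norm (norm (x - y) powr (-\<alpha>) * F y) \<le> norm (G y + h (x - y))"
      using bound Gnn proof eventually_elim
      case (elim y) then show ?case using hnn[of "x - y"] by simp
    qed
  qed
  have "\<bar>\<integral>y. norm (x - y) powr (-\<alpha>) * F y \<partial>lborel\<bar> \<le> (\<integral>y. \<bar>norm (x - y) powr (-\<alpha>) * F y\<bar> \<partial>lborel)"
    by (rule integral_abs_bound)
  also have "\<dots> \<le> (\<integral>y. G y + h (x - y) \<partial>lborel)"
    by (rule integral_mono_AE) (use I sumi bound in auto)
  also have "\<dots> = (\<integral>y. G y \<partial>lborel) + (\<integral>z. h z \<partial>lborel)"
    using G hx hxI by simp
  finally show "\<bar>\<integral>y. norm (x - y) powr (-\<alpha>) * F y \<partial>lborel\<bar> \<le> (\<integral>y. G y \<partial>lborel) + (\<integral>z. indicator (ball 0 1) z * norm (z::'a) powr (-(4/3*\<alpha>)) \<partial>lborel)"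
    unfolding h_def .
qed

lemma conv_meas:
  fixes F :: "'a::euclidean_space \<Rightarrow> real"
  assumes F[measurable]: "F \<in> borel_measurable lborel"
  shows "(\<lambda>x. \<integral>y. norm (x - y) powr (-\<alpha>) * F y \<partial>lborel) \<in> borel_measurable lborel"
proof (rule lborel.borel_measurable_lebesgue_integral)
  show "(\<lambda>(x, y). norm (x - y) powr (-\<alpha>) * F y) \<in> borel_measurable (lborel \<Otimes>\<^sub>M lborel)"
    by measurable
qed

lemma conv_radial:
  fixes F G :: "real^'n \<Rightarrow> real"
  assumes card: "CARD('n) \<in> {3,4,5}"
    and F[measurable]: "F \<in> borel_measurable lborel"
    and ae: "AE y in lborel. F y = G y" and rad: "\<forall>x y. norm x = norm y \<longrightarrow> G x = G y"
    and nx: "norm x = norm x'"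
  shows "(\<integral>y. norm (x' - y) powr (-\<alpha>) * F y \<partial>lborel) = (\<integral>y. norm (x - y) powr (-\<alpha>) * F y \<partial>lborel)"
proof -
  obtain Q where Q: "orthogonal_transformation Q" and Qx: "Q x = x'"
    using orthogonal_transformation_exists[OF nx] by blast
  have lin: "linear Q" using Q orthogonal_transformation_linear by blast
  have nQ: "norm (Q v) = norm v" for v using Q orthogonal_transformation by blast
  have dQ: "distr lborel borel Q = lborel" by (rule lborel_orth[OF Q card])
  have Qm[measurable]: "Q \<in> lborel \<rightarrow>\<^sub>M borel" using meas_lin[OF lin] by simp
  have Qm2: "Q \<in> lborel \<rightarrow>\<^sub>M lborel" using meas_lin[OF lin] by simp
  obtain N where N: "N \<in> null_sets lborel" and NF: "{y \<in> space lborel. \<not> F y = G y} \<subseteq> N"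
    using ae unfolding eventually_ae_filter by auto
  have NQ: "Q -` N \<in> null_sets lborel"
  proof -
    have Ns: "N \<in> sets borel" using N by (simp add: null_sets_def)
    have s: "Q -` N \<in> sets lborel" using measurable_sets[OF Qm Ns] by simp
    have "emeasure lborel (Q -` N) = emeasure (distr lborel borel Q) N"
      using Ns by (subst emeasure_distr) auto
    also have "\<dots> = 0" using dQ N by (simp add: null_sets_def)
    finally show ?thesis using s by (simp add: null_sets_def)
  qed
  have aeQ: "AE z in lborel. F (Q z) = F z"
  proof (rule AE_I'[OF null_sets.Un[OF N NQ]])
    show "{z \<in> space lborel. F (Q z) \<noteq> F z} \<subseteq> N \<union> Q -` N"
    proof
      fix z assume z: "z \<in> {z \<in> space lborel. F (Q z) \<noteq> F z}"
      show "z \<in> N \<union> Q -` N"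
      proof (rule ccontr)
        assume "z \<notin> N \<union> Q -` N"
        then have "F z = G z" "F (Q z) = G (Q z)" using NF by auto
        moreover have "G (Q z) = G z" using rad nQ by blast
        ultimately show False using z by simp
      qed
    qed
  qed
  have "(\<integral>y. norm (x' - y) powr (-\<alpha>) * F y \<partial>lborel)
      = (\<integral>y. norm (Q x - y) powr (-\<alpha>) * F y \<partial>distr lborel borel Q)" using dQ Qx by simp
  also have "\<dots> = (\<integral>z. norm (Q x - Q z) powr (-\<alpha>) * F (Q z) \<partial>lborel)"
    by (rule integral_distr) (simp_all)
  also have "\<dots> = (\<integral>z. norm (x - z) powr (-\<alpha>) * F z \<partial>lborel)"
  proof (rule integral_cong_AE)
    show "AE z in lborel. norm (Q x - Q z) powr (-\<alpha>) * F (Q z) = norm (x - z) powr (-\<alpha>) * F z"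
      using aeQ by eventually_elim (simp add: linear_diff[OF lin, symmetric] nQ)
  qed simp_all
  finally show ?thesis .
qed

lemma integral_nonneg_powr: "0 \<le> (\<integral>x. \<bar>f x :: real\<bar> powr q \<partial>M)"
  by (intro integral_nonneg_AE AE_I2) simp

lemma Lp_norm_nonneg: "0 \<le> Lp_norm q f"
  unfolding Lp_norm_def by simp

lemma Lp_norm_scale:
  assumes q: "0 < q"
  shows "Lp_norm q (\<lambda>x. c * f x) = \<bar>c\<bar> * Lp_norm q f"
proof -
  have "(\<integral>x. \<bar>c * f x\<bar> powr q \<partial>lebesgue) = \<bar>c\<bar> powr q * (\<integral>x. \<bar>f x\<bar> powr q \<partial>lebesgue)"
    by (simp add: abs_mult powr_mult)
  then have "Lp_norm q (\<lambda>x. c * f x) = (\<bar>c\<bar> powr q * (\<integral>x. \<bar>f x\<bar> powr q \<partial>lebesgue)) powr (1/q)"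
    unfolding Lp_norm_def by simp
  also have "\<dots> = (\<bar>c\<bar> powr q) powr (1/q) * (\<integral>x. \<bar>f x\<bar> powr q \<partial>lebesgue) powr (1/q)"
    using integral_nonneg_powr by (intro powr_mult)
  also have "(\<bar>c\<bar> powr q) powr (1/q) = \<bar>c\<bar>"
    using q by (simp add: powr_powr)
  finally show ?thesis unfolding Lp_norm_def by simp
qed

lemma Lp_norm_le1:
  assumes q: "0 < q" and le: "Lp_norm q f \<le> 1"
  shows "(\<integral>x. \<bar>f x\<bar> powr q \<partial>lebesgue) \<le> 1"
proof -
  define I where "I = (\<integral>x. \<bar>f x\<bar> powr q \<partial>lebesgue)"
  have I0: "0 \<le> I" unfolding I_def by (rule integral_nonneg_powr)
  have "I = (I powr (1/q)) powr q" using q I0 by (simp add: powr_powr)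
  also have "\<dots> \<le> 1 powr q"
    by (rule powr_mono2) (use q le in \<open>auto simp: Lp_norm_def I_def\<close>)
  finally show ?thesis unfolding I_def by simp
qed

lemma memLp_scale:
  assumes "memLp q f" shows "memLp q (\<lambda>x. c * f x)"
proof -
  have "integrable lebesgue (\<lambda>x. \<bar>c\<bar> powr q * \<bar>f x\<bar> powr q)"
    using assms unfolding memLp_def by simp
  moreover have "(\<lambda>x. c * f x) \<in> borel_measurable lebesgue"
    using assms unfolding memLp_def by (intro borel_measurable_times borel_measurable_const) auto
  ultimately show ?thesis unfolding memLp_def by (simp add: abs_mult powr_mult)
qed

lemma radial_scale:
  assumes "radial_ae f" shows "radial_ae (\<lambda>x. c * f x)"
proof -
  obtain g where g: "\<forall>x y. norm x = norm y \<longrightarrow> g x = g y" "AE x in lebesgue. f x = g x"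
    using assms unfolding radial_ae_def by blast
  show ?thesis unfolding radial_ae_def
  proof (intro exI conjI)
    show "\<forall>x y. norm x = norm y \<longrightarrow> c * g x = c * g y"
    proof (intro allI impI)
      fix x y :: 'a assume "norm x = norm y"
      then have "g x = g y" by (rule g(1)[rule_format])
      then show "c * g x = c * g y" by simp
    qed
    show "AE x in lebesgue. c * f x = c * g x" using g(2) by eventually_elim simp
  qed
qed

lemma Xd_scale: "\<xi> \<in> Xd \<Longrightarrow> (\<lambda>x. c * \<xi> x) \<in> Xd"
  unfolding Xd_def by (auto intro: memLp_scale radial_scale)

lemma Xnorm_scale: "Xnorm (\<lambda>x. c * \<xi> x) = \<bar>c\<bar> * Xnorm \<xi>"
  unfolding Xnorm_def by (simp add: Lp_norm_scale algebra_simps)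

lemma Xnorm_nonneg: "0 \<le> Xnorm \<xi>"
  unfolding Xnorm_def by (intro add_nonneg_nonneg Lp_norm_nonneg)

lemma gen_bounded:
  fixes T :: "('a::euclidean_space \<Rightarrow> real) \<Rightarrow> 'a \<Rightarrow> real"
  assumes L2: "\<forall>\<xi>\<in>Xd. T \<xi> \<in> L2rad"
    and lin: "\<forall>\<xi>\<in>Xd. \<forall>\<eta>\<in>Xd. \<forall>a b::real.
        AE x in lebesgue. T (\<lambda>y. a * \<xi> y + b * \<eta> y) x = a * T \<xi> x + b * T \<eta> x"
    and sc: "\<And>\<xi> c. \<xi> \<in> Xd \<Longrightarrow> T (\<lambda>y. c * \<xi> y) = (\<lambda>x. c * T \<xi> x)"
    and bd: "\<And>\<xi>. \<xi> \<in> Xd \<Longrightarrow> Xnorm \<xi> \<le> 1 \<Longrightarrow> Lp_norm 2 (T \<xi>) \<le> C0"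
  shows "bounded_linear_X_L2rad T"
  unfolding bounded_linear_X_L2rad_def
proof (intro conjI L2 lin exI[of _ "max C0 0"] ballI)
  fix \<xi> :: "'a \<Rightarrow> real" assume xi: "\<xi> \<in> Xd"
  define N where "N = Xnorm \<xi>"
  have N0: "0 \<le> N" unfolding N_def by (rule Xnorm_nonneg)
  show "Lp_norm 2 (T \<xi>) \<le> max C0 0 * Xnorm \<xi>"
  proof (cases "N > 0")
    case True
    have xi': "(\<lambda>x. (1/N) * \<xi> x) \<in> Xd" by (rule Xd_scale[OF xi])
    have "Xnorm (\<lambda>x. (1/N) * \<xi> x) = \<bar>1/N\<bar> * N" unfolding N_def by (rule Xnorm_scale)
    then have "Xnorm (\<lambda>x. (1/N) * \<xi> x) = 1" using True by simp
    then have le: "Lp_norm 2 (T (\<lambda>x. (1/N) * \<xi> x)) \<le> C0" using bd[OF xi'] by simp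
    have eq: "Lp_norm 2 (T (\<lambda>x. (1/N) * \<xi> x)) = (1/N) * Lp_norm 2 (T \<xi>)"
      using True by (simp only: sc[OF xi] Lp_norm_scale[of 2] zero_less_numeral) simp
    have "Lp_norm 2 (T \<xi>) = N * ((1/N) * Lp_norm 2 (T \<xi>))" using True by simp
    also have "\<dots> \<le> N * C0" using le eq N0 by (intro mult_left_mono) auto
    also have "\<dots> \<le> max C0 0 * N" using N0 by (metis max.cobounded1 mult.commute mult_left_mono)
    finally show ?thesis unfolding N_def .
  next
    case False
    then have N: "N = 0" using N0 by simp
    have "Lp_norm 2 (T \<xi>) \<le> 0"
    proof (rule ccontr)
      assume "\<not> Lp_norm 2 (T \<xi>) \<le> 0"
      then have L: "Lp_norm 2 (T \<xi>) > 0" by simp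
      define c where "c = (\<bar>C0\<bar> + 1) / Lp_norm 2 (T \<xi>)"
      have c: "c > 0" using L unfolding c_def by simp
      have xc: "(\<lambda>x. c * \<xi> x) \<in> Xd" by (rule Xd_scale[OF xi])
      have "Xnorm (\<lambda>x. c * \<xi> x) = \<bar>c\<bar> * N" unfolding N_def by (rule Xnorm_scale)
      then have "Xnorm (\<lambda>x. c * \<xi> x) = 0" using N by simp
      then have "Lp_norm 2 (T (\<lambda>x. c * \<xi> x)) \<le> C0" using bd[OF xc] by simp
      moreover have "Lp_norm 2 (T (\<lambda>x. c * \<xi> x)) = \<bar>C0\<bar> + 1"
        using c L by (simp only: sc[OF xi] Lp_norm_scale[of 2] zero_less_numeral) (simp add: c_def)
      ultimately show False by simp
    qed
    then show ?thesis using N unfolding N_def by simp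
  qed
qed

lemma conv_repr:
  fixes F F' :: "'a::euclidean_space \<Rightarrow> real"
  assumes F[measurable]: "F \<in> borel_measurable lebesgue" and F'[measurable]: "F' \<in> borel_measurable lborel"
    and ae: "AE y in lborel. F y = F' y"
  shows "rconv \<alpha> F x = (\<integral>y. norm (x - y) powr (-\<alpha>) * F' y \<partial>lborel)"
    and "integrable lborel (\<lambda>y. norm (x - y) powr (-\<alpha>) * F' y) \<Longrightarrow> integrable lebesgue (\<lambda>y. norm (x - y) powr (-\<alpha>) * F y)"
proof -
  have F'l[measurable]: "F' \<in> borel_measurable lebesgue" by (rule measurable_completion[OF F'])
  have aeL: "AE y in lebesgue. norm (x - y) powr (-\<alpha>) * F y = norm (x - y) powr (-\<alpha>) * F' y"
    using AE_completion[OF ae] by eventually_elim simp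
  have k1: "(\<lambda>y. norm (x - y) powr (-\<alpha>)) \<in> borel_measurable lborel" by measurable
  have k2: "(\<lambda>y. norm (x - y) powr (-\<alpha>)) \<in> borel_measurable lebesgue"
    by (rule measurable_completion[OF k1])
  have m1: "(\<lambda>y. norm (x - y) powr (-\<alpha>) * F y) \<in> borel_measurable lebesgue"
    using k2 F by (rule borel_measurable_times)
  have m2: "(\<lambda>y. norm (x - y) powr (-\<alpha>) * F' y) \<in> borel_measurable lebesgue"
    using k2 F'l by (rule borel_measurable_times)
  have m3: "(\<lambda>y. norm (x - y) powr (-\<alpha>) * F' y) \<in> borel_measurable lborel" by measurable
  have "rconv \<alpha> F x = (\<integral>y. norm (x - y) powr (-\<alpha>) * F' y \<partial>lebesgue)"
    unfolding rconv_def by (rule integral_cong_AE[OF m1 m2 aeL])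
  also have "\<dots> = (\<integral>y. norm (x - y) powr (-\<alpha>) * F' y \<partial>lborel)"
    by (rule integral_completion[OF m3])
  finally show "rconv \<alpha> F x = (\<integral>y. norm (x - y) powr (-\<alpha>) * F' y \<partial>lborel)" .
  assume I: "integrable lborel (\<lambda>y. norm (x - y) powr (-\<alpha>) * F' y)"
  have "integrable lebesgue (\<lambda>y. norm (x - y) powr (-\<alpha>) * F' y)"
    using I by (subst integrable_completion[OF m3])
  then show "integrable lebesgue (\<lambda>y. norm (x - y) powr (-\<alpha>) * F y)"
    by (rule integrable_cong_AE_imp[OF _ m1]) (use aeL in \<open>auto elim: AE_mp\<close>)
qed

lemma conv_leb:
  fixes F G0 :: "'a::euclidean_space \<Rightarrow> real"
  assumes \<alpha>: "0 < \<alpha>" "4/3*\<alpha> < DIM('a)"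
    and F[measurable]: "F \<in> borel_measurable lebesgue" and G0: "integrable lebesgue G0"
    and dom: "\<And>y. \<bar>F y\<bar> + \<bar>F y\<bar> powr 4 \<le> G0 y"
  shows "\<And>x. integrable lebesgue (\<lambda>y. norm (x - y) powr (-\<alpha>) * F y)"
    and "\<And>x. \<bar>rconv \<alpha> F x\<bar> \<le> (\<integral>y. G0 y \<partial>lebesgue) + (\<integral>z. indicator (ball 0 1) z * norm (z::'a) powr (-(4/3*\<alpha>)) \<partial>lborel)"
    and "rconv \<alpha> F \<in> borel_measurable lebesgue"
proof -
  obtain F' where F'[measurable]: "F' \<in> borel_measurable lborel" and aeF: "AE y in lborel. F y = F' y"
    using completion_ex_borel_measurable_real[OF F] by blast
  have G0m: "G0 \<in> borel_measurable lebesgue" using G0 by (rule borel_measurable_integrable)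
  obtain G' where G'[measurable]: "G' \<in> borel_measurable lborel" and aeG: "AE y in lborel. G0 y = G' y"
    using completion_ex_borel_measurable_real[OF G0m] by blast
  have G'l: "G' \<in> borel_measurable lebesgue" by (rule measurable_completion[OF G'])
  have G'i: "integrable lebesgue G'"
    by (rule integrable_cong_AE_imp[OF G0 G'l]) (use AE_completion[OF aeG] in simp)
  then have G'i2: "integrable lborel G'" by (simp add: integrable_completion[OF G'])
  have intG: "(\<integral>y. G0 y \<partial>lebesgue) = (\<integral>y. G' y \<partial>lborel)"
  proof -
    have "(\<integral>y. G0 y \<partial>lebesgue) = (\<integral>y. G' y \<partial>lebesgue)"
      by (rule integral_cong_AE[OF G0m G'l]) (use AE_completion[OF aeG] in simp)
    also have "\<dots> = (\<integral>y. G' y \<partial>lborel)" by (rule integral_completion[OF G'])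
    finally show ?thesis .
  qed
  have dom': "AE y in lborel. \<bar>F' y\<bar> + \<bar>F' y\<bar> powr 4 \<le> G' y"
    using aeF aeG proof eventually_elim
    case (elim y) then show ?case using dom[of y] by simp
  qed
  note cb = conv_basic[OF \<alpha> F' G'i2 dom']
  show "integrable lebesgue (\<lambda>y. norm (x - y) powr (-\<alpha>) * F y)" for x
    by (rule conv_repr(2)[OF F F' aeF cb(1)])
  show "\<bar>rconv \<alpha> F x\<bar> \<le> (\<integral>y. G0 y \<partial>lebesgue) + (\<integral>z. indicator (ball 0 1) z * norm (z::'a) powr (-(4/3*\<alpha>)) \<partial>lborel)" for x
    unfolding conv_repr(1)[OF F F' aeF] intG by (rule cb(2))
  have "rconv \<alpha> F = (\<lambda>x. \<integral>y. norm (x - y) powr (-\<alpha>) * F' y \<partial>lborel)"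
    by (rule ext) (rule conv_repr(1)[OF F F' aeF])
  also have "\<dots> \<in> borel_measurable lebesgue"
    by (rule measurable_completion) (rule conv_meas[OF F'])
  finally show "rconv \<alpha> F \<in> borel_measurable lebesgue" .
qed

lemma conv_leb_radial:
  fixes F :: "real^'n \<Rightarrow> real"
  assumes card: "CARD('n) \<in> {3,4,5}"
    and F[measurable]: "F \<in> borel_measurable lebesgue" and rad: "radial_ae F"
    and nx: "norm x = norm x'"
  shows "rconv \<alpha> F x' = rconv \<alpha> F x"
proof -
  obtain F' where F'[measurable]: "F' \<in> borel_measurable lborel" and aeF: "AE y in lborel. F y = F' y"
    using completion_ex_borel_measurable_real[OF F] by blast
  obtain g where g: "\<forall>x y. norm x = norm y \<longrightarrow> g x = g y" and aeg: "AE x in lebesgue. F x = g x"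
    using rad unfolding radial_ae_def by (elim exE conjE)
  have aeg': "AE y in lborel. F' y = g y"
    using aeF aeg[unfolded AE_completion_iff] by eventually_elim simp
  show ?thesis
    unfolding conv_repr(1)[OF F F' aeF] by (rule conv_radial[OF card F' aeg' g nx])
qed

lemma abs_powr2: "\<bar>t::real\<bar> powr 2 = t^2"
  by (cases "t = 0") (simp_all add: powr_numeral)

lemma powr_mid:
  fixes t e :: real assumes "2 \<le> e" "e \<le> 10"
  shows "\<bar>t\<bar> powr e \<le> \<bar>t\<bar> powr 2 + \<bar>t\<bar> powr 10"
proof (cases "\<bar>t\<bar> \<le> 1")
  case True
  have "\<bar>t\<bar> powr e \<le> \<bar>t\<bar> powr 2" by (rule powr_mono') (use assms True in auto)
  then show ?thesis using powr_ge_zero[of "\<bar>t\<bar>" 10] by linarith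
next
  case False
  have "\<bar>t\<bar> powr e \<le> \<bar>t\<bar> powr 10" by (rule powr_mono) (use assms False in auto)
  then show ?thesis using powr_ge_zero[of "\<bar>t\<bar>" 2] by linarith
qed

lemma abspow_t:
  fixes s t :: real assumes "0 \<le> s"
  shows "\<bar>abspow t s * t\<bar> = \<bar>t\<bar> powr (1 + s)"
proof (cases "s = 0")
  case True then show ?thesis by (simp add: abspow_def)
next
  case False
  then have "\<bar>abspow t s * t\<bar> = \<bar>t\<bar> powr s * \<bar>t\<bar> powr 1" by (simp add: abspow_def abs_mult)
  also have "\<dots> = \<bar>t\<bar> powr (1 + s)" by (simp add: powr_add mult.commute)
  finally show ?thesis .
qed

lemma ineqV:
  fixes s t w :: real assumes s: "0 \<le> s" "s \<le> 1/2"
  shows "(abspow t s * w)^2 \<le> \<bar>t\<bar> powr 2 + \<bar>w\<bar> powr 2 + \<bar>w\<bar> powr 10"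
proof (cases "s = 0")
  case True
  then have "(abspow t s * w)^2 = \<bar>w\<bar> powr 2" by (simp add: abspow_def abs_powr2)
  then show ?thesis using powr_ge_zero[of "\<bar>t\<bar>" 2] powr_ge_zero[of "\<bar>w\<bar>" 10] by linarith
next
  case False
  then have s0: "0 < s" using s by simp
  have "(abspow t s * w)^2 = \<bar>t\<bar> powr (2 * s) * \<bar>w\<bar> powr 2"
  proof -
    have "(abspow t s * w)^2 = ( \<bar>t\<bar> powr s)^2 * w^2" using False by (simp add: abspow_def power_mult_distrib)
    also have "( \<bar>t\<bar> powr s)^2 = \<bar>t\<bar> powr (2 * s)"
    proof (cases "t = 0")
      case True then show ?thesis using s0 by simp
    next
      case False
      then have pos: "0 < \<bar>t\<bar> powr s" by simp
      have "( \<bar>t\<bar> powr s)^2 = ( \<bar>t\<bar> powr s) powr (real 2)" by (rule powr_realpow[OF pos, symmetric])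
      also have "\<dots> = \<bar>t\<bar> powr (2 * s)" by (simp add: powr_powr mult.commute)
      finally show ?thesis .
    qed
    finally show ?thesis by (simp add: abs_powr2)
  qed
  also have "\<dots> \<le> ( \<bar>t\<bar> powr (2 * s)) powr (1/s) + ( \<bar>w\<bar> powr 2) powr (1/(1-s))"
    by (rule young_max) (use s0 s in \<open>auto simp: field_simps\<close>)
  also have "( \<bar>t\<bar> powr (2 * s)) powr (1/s) = \<bar>t\<bar> powr 2" using s0 by (simp add: powr_powr)
  also have "( \<bar>w\<bar> powr 2) powr (1/(1-s)) = \<bar>w\<bar> powr (2/(1-s))" unfolding powr_powr by simp
  also have "\<bar>w\<bar> powr (2/(1-s)) \<le> \<bar>w\<bar> powr 2 + \<bar>w\<bar> powr 10"
    by (rule powr_mid) (use s0 s in \<open>auto simp: field_simps\<close>)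
  finally show ?thesis by simp
qed

lemma ineqA:
  fixes s t w :: real assumes s: "0 \<le> s" "s \<le> 1/4"
  shows "\<bar>abspow t s * t * w\<bar> + \<bar>abspow t s * t * w\<bar> powr 4
    \<le> 2 * ( \<bar>t\<bar> powr 2 + \<bar>t\<bar> powr 10 + \<bar>w\<bar> powr 2 + \<bar>w\<bar> powr 10)"
proof -
  define a where "a = \<bar>t\<bar> powr (1 + s)"
  have a0: "0 \<le> a" unfolding a_def by simp
  have eq: "\<bar>abspow t s * t * w\<bar> = a * \<bar>w\<bar>" unfolding a_def using abspow_t[OF s(1)] by (simp add: abs_mult)
  have y: "1/2 + 1/2 = (1::real)" by simp
  have "a * \<bar>w\<bar> \<le> a powr 2 + \<bar>w\<bar> powr 2" by (rule young_max) (use a0 in auto)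
  also have "a powr 2 = \<bar>t\<bar> powr (2 + 2 * s)" unfolding a_def by (simp add: powr_powr algebra_simps)
  also have "\<bar>t\<bar> powr (2 + 2 * s) \<le> \<bar>t\<bar> powr 2 + \<bar>t\<bar> powr 10" by (rule powr_mid) (use s in auto)
  finally have h1: "a * \<bar>w\<bar> \<le> \<bar>t\<bar> powr 2 + \<bar>t\<bar> powr 10 + \<bar>w\<bar> powr 2" by simp
  have "(a * \<bar>w\<bar>) powr 4 = a powr 4 * \<bar>w\<bar> powr 4" by (simp add: powr_mult)
  also have "\<dots> \<le> (a powr 4) powr 2 + ( \<bar>w\<bar> powr 4) powr 2" by (rule young_max) auto
  also have "(a powr 4) powr 2 = \<bar>t\<bar> powr (8 + 8 * s)" unfolding a_def by (simp add: powr_powr algebra_simps)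
  also have "( \<bar>w\<bar> powr 4) powr 2 = \<bar>w\<bar> powr 8" by (simp add: powr_powr)
  also have "\<bar>t\<bar> powr (8 + 8 * s) \<le> \<bar>t\<bar> powr 2 + \<bar>t\<bar> powr 10" by (rule powr_mid) (use s in auto)
  also have "\<bar>w\<bar> powr 8 \<le> \<bar>w\<bar> powr 2 + \<bar>w\<bar> powr 10" by (rule powr_mid) auto
  finally have h2: "(a * \<bar>w\<bar>) powr 4 \<le> \<bar>t\<bar> powr 2 + \<bar>t\<bar> powr 10 + ( \<bar>w\<bar> powr 2 + \<bar>w\<bar> powr 10)" by simp
  show ?thesis unfolding eq using h1 h2 powr_ge_zero[of "\<bar>w\<bar>" 10] by (smt (verit))
qed

lemma ineqA2:
  fixes s t :: real assumes s: "0 \<le> s" "s \<le> 4"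
  shows "(abspow t s * t)^2 \<le> \<bar>t\<bar> powr 2 + \<bar>t\<bar> powr 10"
proof -
  have "(abspow t s * t)^2 = \<bar>abspow t s * t\<bar> powr 2" by (simp add: abs_powr2)
  also have "\<dots> = \<bar>t\<bar> powr (2 + 2 * s)" unfolding abspow_t[OF s(1)] by (simp add: powr_powr algebra_simps)
  also have "\<dots> \<le> \<bar>t\<bar> powr 2 + \<bar>t\<bar> powr 10" by (rule powr_mid) (use s in auto)
  finally show ?thesis .
qed

lemma ineqW:
  fixes p t :: real assumes p: "2 \<le> p" "p \<le> 5/2"
  shows "\<bar>abspow t p\<bar> + \<bar>abspow t p\<bar> powr 4 \<le> 2 * ( \<bar>t\<bar> powr 2 + \<bar>t\<bar> powr 10)"
proof -
  have e: "abspow t p = \<bar>t\<bar> powr p" using p by (simp add: abspow_def)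
  have "\<bar>t\<bar> powr p \<le> \<bar>t\<bar> powr 2 + \<bar>t\<bar> powr 10" by (rule powr_mid) (use p in auto)
  moreover have "( \<bar>t\<bar> powr p) powr 4 \<le> \<bar>t\<bar> powr 2 + \<bar>t\<bar> powr 10"
    unfolding powr_powr by (rule powr_mid) (use p in auto)
  ultimately show ?thesis unfolding e by simp
qed

lemma abspow_meas[measurable]:
  assumes "f \<in> borel_measurable M" shows "(\<lambda>x. abspow (f x) a) \<in> borel_measurable M"
  using assms by (cases "a = 0") (simp_all add: abspow_def measurable_abs_powr)

lemma Xd_facts:
  assumes "\<xi> \<in> Xd"
  shows "\<xi> \<in> borel_measurable lebesgue" "integrable lebesgue (\<lambda>x. \<bar>\<xi> x\<bar> powr 2)"
    "integrable lebesgue (\<lambda>x. \<bar>\<xi> x\<bar> powr 10)" "radial_ae \<xi>"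
  using assms unfolding Xd_def memLp_def by auto

lemma Xd_small:
  assumes "Xnorm \<xi> \<le> 1"
  shows "(\<integral>x. \<bar>\<xi> x\<bar> powr 2 \<partial>lebesgue) \<le> 1" "(\<integral>x. \<bar>\<xi> x\<bar> powr 10 \<partial>lebesgue) \<le> 1"
proof -
  have a: "Lp_norm 2 \<xi> \<le> 1" and b: "Lp_norm 10 \<xi> \<le> 1"
    using assms Lp_norm_nonneg[of 2 \<xi>] Lp_norm_nonneg[of 10 \<xi>] unfolding Xnorm_def by linarith+
  show "(\<integral>x. \<bar>\<xi> x\<bar> powr 2 \<partial>lebesgue) \<le> 1" by (rule Lp_norm_le1[OF _ a]) simp
  show "(\<integral>x. \<bar>\<xi> x\<bar> powr 10 \<partial>lebesgue) \<le> 1" by (rule Lp_norm_le1[OF _ b]) simp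
qed

lemma powr2_sq: "\<bar>a * b\<bar> powr 2 = a^2 * b^2" for a b :: real
  by (simp add: abs_powr2 power_mult_distrib)

lemma V_main:
  fixes u :: "real^'n \<Rightarrow> real"
  assumes card: "CARD('n) \<in> {3,4,5}" and \<alpha>: "0 < \<alpha>" "4/3*\<alpha> < real CARD('n)"
    and p: "2 \<le> p" "p \<le> 5/2" and u: "u \<in> Xd"
  shows "bounded_linear_X_L2rad (V_op u \<alpha> p)"
proof -
  have \<alpha>': "4/3*\<alpha> < DIM(real^'n)" using \<alpha> by simp
  note uf = Xd_facts[OF u]
  have um[measurable]: "u \<in> borel_measurable lebesgue" by (rule uf(1))
  obtain gu where gu0: "\<forall>x y. norm x = norm y \<longrightarrow> gu x = gu y" and aeu: "AE x in lebesgue. u x = gu x"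
    using uf(4) unfolding radial_ae_def by (elim exE conjE)
  note gu = gu0[rule_format]
  define s where "s = p - 2"
  have s: "0 \<le> s" "s \<le> 1/2" using p unfolding s_def by auto
  define F where "F = (\<lambda>y. abspow (u y) p)"
  have Fm: "F \<in> borel_measurable lebesgue" unfolding F_def by measurable
  define U where "U = (\<lambda>y. \<bar>u y\<bar> powr 2 + \<bar>u y\<bar> powr 10)"
  have Ui: "integrable lebesgue U" unfolding U_def using uf(2,3) by simp
  have G0i: "integrable lebesgue (\<lambda>y. 2 * U y)" using Ui by simp
  have dom: "\<bar>F y\<bar> + \<bar>F y\<bar> powr 4 \<le> 2 * U y" for y
    unfolding F_def U_def by (rule ineqW[OF p])
  note cl = conv_leb[OF \<alpha>(1) \<alpha>' Fm G0i dom]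
  define W where "W = rconv \<alpha> F"
  define M where "M = (\<integral>y. 2 * U y \<partial>lebesgue) + (\<integral>z. indicator (ball 0 1) z * norm (z::real^'n) powr (-(4/3*\<alpha>)) \<partial>lborel)"
  have WM: "\<bar>W x\<bar> \<le> M" for x unfolding W_def M_def by (rule cl(2))
  have Wm[measurable]: "W \<in> borel_measurable lebesgue" unfolding W_def by (rule cl(3))
  have Frad: "radial_ae F"
    unfolding radial_ae_def
  proof (intro exI conjI)
    show "\<forall>x y. norm x = norm y \<longrightarrow> abspow (gu x) p = abspow (gu y) p"
    proof (intro allI impI)
      fix x y :: "real^'n" assume "norm x = norm y"
      then have "gu x = gu y" by (rule gu)
      then show "abspow (gu x) p = abspow (gu y) p" by simp
    qed
    show "AE x in lebesgue. F x = abspow (gu x) p" using aeu by eventually_elim (simp add: F_def)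
  qed
  have Wrad: "W x' = W x" if "norm x = norm x'" for x x'
    unfolding W_def by (rule conv_leb_radial[OF card Fm Frad that])
  have Vform: "V_op u \<alpha> p \<xi> = (\<lambda>x. W x * abspow (u x) s * \<xi> x)" for \<xi>
    by (rule ext) (simp add: V_op_def W_def F_def s_def)
  have ptw: "\<bar>V_op u \<alpha> p \<xi> x\<bar> powr 2 \<le> M^2 * ( \<bar>u x\<bar> powr 2 + \<bar>\<xi> x\<bar> powr 2 + \<bar>\<xi> x\<bar> powr 10)" for \<xi> x
  proof -
    have "\<bar>V_op u \<alpha> p \<xi> x\<bar> powr 2 = (W x)^2 * (abspow (u x) s * \<xi> x)^2"
      unfolding Vform by (simp add: abs_powr2 power_mult_distrib)
    also have "\<dots> \<le> M^2 * ( \<bar>u x\<bar> powr 2 + \<bar>\<xi> x\<bar> powr 2 + \<bar>\<xi> x\<bar> powr 10)"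
    proof (rule mult_mono)
      show "(W x)^2 \<le> M^2" using power_mono[OF WM[of x] abs_ge_zero, of 2] by simp
      show "(abspow (u x) s * \<xi> x)^2 \<le> \<bar>u x\<bar> powr 2 + \<bar>\<xi> x\<bar> powr 2 + \<bar>\<xi> x\<bar> powr 10"
        by (rule ineqV[OF s])
    qed auto
    finally show ?thesis .
  qed
  have Vm: "V_op u \<alpha> p \<xi> \<in> borel_measurable lebesgue" if "\<xi> \<in> borel_measurable lebesgue" for \<xi>
    unfolding Vform using that by measurable
  have Vint: "integrable lebesgue (\<lambda>x. \<bar>V_op u \<alpha> p \<xi> x\<bar> powr 2)" if xi: "\<xi> \<in> Xd" for \<xi>
  proof (rule Bochner_Integration.integrable_bound)
    note xf = Xd_facts[OF xi]
    show "integrable lebesgue (\<lambda>x. M^2 * ( \<bar>u x\<bar> powr 2 + \<bar>\<xi> x\<bar> powr 2 + \<bar>\<xi> x\<bar> powr 10))"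
      using uf(2) xf(2,3) by simp
    show "(\<lambda>x. \<bar>V_op u \<alpha> p \<xi> x\<bar> powr 2) \<in> borel_measurable lebesgue"
      using Vm[OF xf(1)] by measurable
    show "AE x in lebesgue. norm ( \<bar>V_op u \<alpha> p \<xi> x\<bar> powr 2) \<le> norm (M^2 * ( \<bar>u x\<bar> powr 2 + \<bar>\<xi> x\<bar> powr 2 + \<bar>\<xi> x\<bar> powr 10))"
      using ptw by (intro AE_I2) (simp add: order_trans[OF _ abs_ge_self])
  qed
  show ?thesis
  proof (rule gen_bounded)
    show "\<forall>\<xi>\<in>Xd. V_op u \<alpha> p \<xi> \<in> L2rad"
    proof
      fix \<xi> :: "real^'n \<Rightarrow> real" assume xi: "\<xi> \<in> Xd"
      note xf = Xd_facts[OF xi]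
      obtain g where g0: "\<forall>x y. norm x = norm y \<longrightarrow> g x = g y" and aeg: "AE x in lebesgue. \<xi> x = g x"
        using xf(4) unfolding radial_ae_def by (elim exE conjE)
      note g = g0[rule_format]
      have "memLp 2 (V_op u \<alpha> p \<xi>)" unfolding memLp_def using Vm[OF xf(1)] Vint[OF xi] by simp
      moreover have "radial_ae (V_op u \<alpha> p \<xi>)"
        unfolding radial_ae_def
      proof (intro exI conjI)
        show "\<forall>x y. norm x = norm y \<longrightarrow> W x * abspow (gu x) s * g x = W y * abspow (gu y) s * g y"
        proof (intro allI impI)
          fix x y :: "real^'n" assume n: "norm x = norm y"
          have "W y = W x" by (rule Wrad[OF n])
          moreover have "gu x = gu y" by (rule gu[OF n])
          moreover have "g x = g y" by (rule g[OF n])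
          ultimately show "W x * abspow (gu x) s * g x = W y * abspow (gu y) s * g y" by simp
        qed
        show "AE x in lebesgue. V_op u \<alpha> p \<xi> x = W x * abspow (gu x) s * g x"
          using aeu aeg by eventually_elim (simp add: Vform)
      qed
      ultimately show "V_op u \<alpha> p \<xi> \<in> L2rad" unfolding L2rad_def by simp
    qed
    show "\<forall>\<xi>\<in>Xd. \<forall>\<eta>\<in>Xd. \<forall>a b::real. AE x in lebesgue.
        V_op u \<alpha> p (\<lambda>y. a * \<xi> y + b * \<eta> y) x = a * V_op u \<alpha> p \<xi> x + b * V_op u \<alpha> p \<eta> x"
      by (intro ballI allI AE_I2) (simp add: Vform algebra_simps)
    show "V_op u \<alpha> p (\<lambda>y. c * \<xi> y) = (\<lambda>x. c * V_op u \<alpha> p \<xi> x)" for \<xi> c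
      by (simp add: Vform algebra_simps)
    define Iu where "Iu = (\<integral>x. \<bar>u x\<bar> powr 2 \<partial>lebesgue)"
    show "Lp_norm 2 (V_op u \<alpha> p \<xi>) \<le> (M^2 * (Iu + 2)) powr (1/2)"
      if xi: "\<xi> \<in> Xd" and xn: "Xnorm \<xi> \<le> 1" for \<xi>
    proof -
      note xf = Xd_facts[OF xi]
      note xs = Xd_small[OF xn]
      have "(\<integral>x. \<bar>V_op u \<alpha> p \<xi> x\<bar> powr 2 \<partial>lebesgue)
          \<le> (\<integral>x. M^2 * ( \<bar>u x\<bar> powr 2 + \<bar>\<xi> x\<bar> powr 2 + \<bar>\<xi> x\<bar> powr 10) \<partial>lebesgue)"
        by (rule integral_mono) (use Vint[OF xi] uf(2) xf(2,3) ptw in auto)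
      also have "\<dots> = M^2 * (Iu + (\<integral>x. \<bar>\<xi> x\<bar> powr 2 \<partial>lebesgue) + (\<integral>x. \<bar>\<xi> x\<bar> powr 10 \<partial>lebesgue))"
        using uf(2) xf(2,3) by (simp add: Iu_def)
      also have "\<dots> \<le> M^2 * (Iu + 2)"
        using xs by (intro mult_left_mono) auto
      finally have le: "(\<integral>x. \<bar>V_op u \<alpha> p \<xi> x\<bar> powr 2 \<partial>lebesgue) \<le> M^2 * (Iu + 2)" .
      show ?thesis unfolding Lp_norm_def
        by (rule powr_mono2) (use le integral_nonneg_powr in auto)
    qed
  qed
qed

lemma A_main:
  fixes u :: "real^'n \<Rightarrow> real"
  assumes card: "CARD('n) \<in> {3,4,5}" and \<alpha>: "0 < \<alpha>" "4/3*\<alpha> < real CARD('n)"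
    and p: "2 \<le> p" "p \<le> 9/4" and u: "u \<in> Xd"
  shows "bounded_linear_X_L2rad (A_op u \<alpha> p)"
proof -
  have \<alpha>': "4/3*\<alpha> < DIM(real^'n)" using \<alpha> by simp
  note uf = Xd_facts[OF u]
  have um[measurable]: "u \<in> borel_measurable lebesgue" by (rule uf(1))
  obtain gu where gu0: "\<forall>x y. norm x = norm y \<longrightarrow> gu x = gu y" and aeu: "AE x in lebesgue. u x = gu x"
    using uf(4) unfolding radial_ae_def by (elim exE conjE)
  note gu = gu0[rule_format]
  define s where "s = p - 2"
  have s: "0 \<le> s" "s \<le> 1/4" using p unfolding s_def by auto
  define Fx where "Fx = (\<lambda>\<xi> y. abspow (u y) s * u y * \<xi> y)"
  define G where "G = (\<lambda>\<xi> y. 2 * ( \<bar>u y\<bar> powr 2 + \<bar>u y\<bar> powr 10 + \<bar>\<xi> y\<bar> powr 2 + \<bar>\<xi> y\<bar> powr 10))"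
  define Ck where "Ck = (\<integral>z. indicator (ball 0 1) z * norm (z::real^'n) powr (-(4/3*\<alpha>)) \<partial>lborel)"
  define Mx where "Mx = (\<lambda>\<xi>. (\<integral>y. G \<xi> y \<partial>lebesgue) + Ck)"
  have Aform: "A_op u \<alpha> p \<xi> = (\<lambda>x. rconv \<alpha> (Fx \<xi>) x * (abspow (u x) s * u x))" for \<xi>
    by (rule ext) (simp add: A_op_def Fx_def s_def)
  have Fm: "Fx \<xi> \<in> borel_measurable lebesgue" if "\<xi> \<in> Xd" for \<xi>
    using Xd_facts(1)[OF that] unfolding Fx_def by measurable
  have Gi: "integrable lebesgue (G \<xi>)" if "\<xi> \<in> Xd" for \<xi>
    using Xd_facts(2,3)[OF that] uf(2,3) unfolding G_def by simp
  have dom: "\<bar>Fx \<xi> y\<bar> + \<bar>Fx \<xi> y\<bar> powr 4 \<le> G \<xi> y" for \<xi> y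
    unfolding Fx_def G_def by (rule ineqA[OF s])
  have cl1: "integrable lebesgue (\<lambda>y. norm (x - y) powr (-\<alpha>) * Fx \<xi> y)" if "\<xi> \<in> Xd" for \<xi> x
    by (rule conv_leb(1)[OF \<alpha>(1) \<alpha>' Fm[OF that] Gi[OF that] dom])
  have cl2: "\<bar>rconv \<alpha> (Fx \<xi>) x\<bar> \<le> Mx \<xi>" if "\<xi> \<in> Xd" for \<xi> x
    unfolding Mx_def Ck_def by (rule conv_leb(2)[OF \<alpha>(1) \<alpha>' Fm[OF that] Gi[OF that] dom])
  have cl3: "rconv \<alpha> (Fx \<xi>) \<in> borel_measurable lebesgue" if "\<xi> \<in> Xd" for \<xi>
    by (rule conv_leb(3)[OF \<alpha>(1) \<alpha>' Fm[OF that] Gi[OF that] dom])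
  have ptw: "\<bar>A_op u \<alpha> p \<xi> x\<bar> powr 2 \<le> (Mx \<xi>)^2 * ( \<bar>u x\<bar> powr 2 + \<bar>u x\<bar> powr 10)"
    if xi: "\<xi> \<in> Xd" for \<xi> x
  proof -
    have "\<bar>A_op u \<alpha> p \<xi> x\<bar> powr 2 = (rconv \<alpha> (Fx \<xi>) x)^2 * (abspow (u x) s * u x)^2"
      unfolding Aform by (simp add: abs_powr2 power_mult_distrib)
    also have "\<dots> \<le> (Mx \<xi>)^2 * ( \<bar>u x\<bar> powr 2 + \<bar>u x\<bar> powr 10)"
    proof (rule mult_mono)
      show "(rconv \<alpha> (Fx \<xi>) x)^2 \<le> (Mx \<xi>)^2"
        using power_mono[OF cl2[OF xi, of x] abs_ge_zero, of 2] by simp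
      show "(abspow (u x) s * u x)^2 \<le> \<bar>u x\<bar> powr 2 + \<bar>u x\<bar> powr 10"
        by (rule ineqA2) (use s in auto)
    qed auto
    finally show ?thesis .
  qed
  have Am: "A_op u \<alpha> p \<xi> \<in> borel_measurable lebesgue" if xi: "\<xi> \<in> Xd" for \<xi>
    unfolding Aform using cl3[OF xi] by measurable
  have Aint: "integrable lebesgue (\<lambda>x. \<bar>A_op u \<alpha> p \<xi> x\<bar> powr 2)" if xi: "\<xi> \<in> Xd" for \<xi>
  proof (rule Bochner_Integration.integrable_bound)
    show "integrable lebesgue (\<lambda>x. (Mx \<xi>)^2 * ( \<bar>u x\<bar> powr 2 + \<bar>u x\<bar> powr 10))"
      using uf(2,3) by simp
    show "(\<lambda>x. \<bar>A_op u \<alpha> p \<xi> x\<bar> powr 2) \<in> borel_measurable lebesgue"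
      using Am[OF xi] by measurable
    show "AE x in lebesgue. norm ( \<bar>A_op u \<alpha> p \<xi> x\<bar> powr 2) \<le> norm ((Mx \<xi>)^2 * ( \<bar>u x\<bar> powr 2 + \<bar>u x\<bar> powr 10))"
      using ptw[OF xi] by (intro AE_I2) (simp add: order_trans[OF _ abs_ge_self])
  qed
  show ?thesis
  proof (rule gen_bounded)
    show "\<forall>\<xi>\<in>Xd. A_op u \<alpha> p \<xi> \<in> L2rad"
    proof
      fix \<xi> :: "real^'n \<Rightarrow> real" assume xi: "\<xi> \<in> Xd"
      note xf = Xd_facts[OF xi]
      obtain g where g0: "\<forall>x y. norm x = norm y \<longrightarrow> g x = g y" and aeg: "AE x in lebesgue. \<xi> x = g x"
        using xf(4) unfolding radial_ae_def by (elim exE conjE)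
      note g = g0[rule_format]
      have Frad: "radial_ae (Fx \<xi>)"
        unfolding radial_ae_def
      proof (intro exI conjI)
        show "\<forall>x y. norm x = norm y \<longrightarrow> abspow (gu x) s * gu x * g x = abspow (gu y) s * gu y * g y"
        proof (intro allI impI)
          fix x y :: "real^'n" assume n: "norm x = norm y"
          have "gu x = gu y" by (rule gu[OF n])
          moreover have "g x = g y" by (rule g[OF n])
          ultimately show "abspow (gu x) s * gu x * g x = abspow (gu y) s * gu y * g y" by simp
        qed
        show "AE x in lebesgue. Fx \<xi> x = abspow (gu x) s * gu x * g x"
          using aeu aeg by eventually_elim (simp add: Fx_def)
      qed
      have Rrad: "rconv \<alpha> (Fx \<xi>) x' = rconv \<alpha> (Fx \<xi>) x" if "norm x = norm x'" for x x'
        by (rule conv_leb_radial[OF card Fm[OF xi] Frad that])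
      have "memLp 2 (A_op u \<alpha> p \<xi>)" unfolding memLp_def using Am[OF xi] Aint[OF xi] by simp
      moreover have "radial_ae (A_op u \<alpha> p \<xi>)"
        unfolding radial_ae_def
      proof (intro exI conjI)
        show "\<forall>x y. norm x = norm y \<longrightarrow> rconv \<alpha> (Fx \<xi>) x * (abspow (gu x) s * gu x) = rconv \<alpha> (Fx \<xi>) y * (abspow (gu y) s * gu y)"
        proof (intro allI impI)
          fix x y :: "real^'n" assume n: "norm x = norm y"
          have "rconv \<alpha> (Fx \<xi>) y = rconv \<alpha> (Fx \<xi>) x" by (rule Rrad[OF n])
          moreover have "gu x = gu y" by (rule gu[OF n])
          ultimately show "rconv \<alpha> (Fx \<xi>) x * (abspow (gu x) s * gu x) = rconv \<alpha> (Fx \<xi>) y * (abspow (gu y) s * gu y)" by simp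
        qed
        show "AE x in lebesgue. A_op u \<alpha> p \<xi> x = rconv \<alpha> (Fx \<xi>) x * (abspow (gu x) s * gu x)"
          using aeu by eventually_elim (simp add: Aform)
      qed
      ultimately show "A_op u \<alpha> p \<xi> \<in> L2rad" unfolding L2rad_def by simp
    qed
    show "\<forall>\<xi>\<in>Xd. \<forall>\<eta>\<in>Xd. \<forall>a b::real. AE x in lebesgue.
        A_op u \<alpha> p (\<lambda>y. a * \<xi> y + b * \<eta> y) x = a * A_op u \<alpha> p \<xi> x + b * A_op u \<alpha> p \<eta> x"
    proof (intro ballI allI AE_I2)
      fix \<xi> \<eta> :: "real^'n \<Rightarrow> real" and a b :: real and x :: "real^'n"
      assume xi: "\<xi> \<in> Xd" and eta: "\<eta> \<in> Xd"
      have i1: "integrable lebesgue (\<lambda>y. norm (x - y) powr (-\<alpha>) * Fx \<xi> y)" by (rule cl1[OF xi])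
      have i2: "integrable lebesgue (\<lambda>y. norm (x - y) powr (-\<alpha>) * Fx \<eta> y)" by (rule cl1[OF eta])
      have eq: "(\<lambda>y. norm (x - y) powr (-\<alpha>) * Fx (\<lambda>y. a * \<xi> y + b * \<eta> y) y)
          = (\<lambda>y. a * (norm (x - y) powr (-\<alpha>) * Fx \<xi> y) + b * (norm (x - y) powr (-\<alpha>) * Fx \<eta> y))"
        by (rule ext) (simp add: Fx_def algebra_simps)
      have "rconv \<alpha> (Fx (\<lambda>y. a * \<xi> y + b * \<eta> y)) x = a * rconv \<alpha> (Fx \<xi>) x + b * rconv \<alpha> (Fx \<eta>) x"
        unfolding rconv_def eq using i1 i2 by simp
      then show "A_op u \<alpha> p (\<lambda>y. a * \<xi> y + b * \<eta> y) x = a * A_op u \<alpha> p \<xi> x + b * A_op u \<alpha> p \<eta> x"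
        unfolding Aform by (simp add: algebra_simps)
    qed
    show "A_op u \<alpha> p (\<lambda>y. c * \<xi> y) = (\<lambda>x. c * A_op u \<alpha> p \<xi> x)" for \<xi> c
    proof -
      have "rconv \<alpha> (Fx (\<lambda>y. c * \<xi> y)) x = c * rconv \<alpha> (Fx \<xi>) x" for x
      proof -
        have eq: "(\<lambda>y. norm (x - y) powr (-\<alpha>) * Fx (\<lambda>y. c * \<xi> y) y) = (\<lambda>y. c * (norm (x - y) powr (-\<alpha>) * Fx \<xi> y))"
          by (rule ext) (simp add: Fx_def algebra_simps)
        show ?thesis unfolding rconv_def eq by (rule integral_mult_right_zero)
      qed
      then show ?thesis unfolding Aform by (simp add: algebra_simps)
    qed
    define Iu where "Iu = (\<integral>x. \<bar>u x\<bar> powr 2 + \<bar>u x\<bar> powr 10 \<partial>lebesgue)"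
    define M1 where "M1 = 2 * (Iu + 2) + Ck"
    show "Lp_norm 2 (A_op u \<alpha> p \<xi>) \<le> (M1^2 * Iu) powr (1/2)"
      if xi: "\<xi> \<in> Xd" and xn: "Xnorm \<xi> \<le> 1" for \<xi>
    proof -
      note xf = Xd_facts[OF xi]
      note xs = Xd_small[OF xn]
      have Mx0: "0 \<le> Mx \<xi>" using cl2[OF xi, of 0] by linarith
      have "(\<integral>y. G \<xi> y \<partial>lebesgue) = 2 * (Iu + (\<integral>x. \<bar>\<xi> x\<bar> powr 2 \<partial>lebesgue) + (\<integral>x. \<bar>\<xi> x\<bar> powr 10 \<partial>lebesgue))"
        using uf(2,3) xf(2,3) by (simp add: G_def Iu_def)
      also have "\<dots> \<le> 2 * (Iu + 2)" using xs by simp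
      finally have "Mx \<xi> \<le> M1" unfolding Mx_def M1_def by simp
      then have MM: "(Mx \<xi>)^2 \<le> M1^2" using power_mono[OF _ Mx0, of _ 2] by simp
      have Iu0: "0 \<le> Iu" unfolding Iu_def by (intro integral_nonneg_AE AE_I2) simp
      have "(\<integral>x. \<bar>A_op u \<alpha> p \<xi> x\<bar> powr 2 \<partial>lebesgue)
          \<le> (\<integral>x. (Mx \<xi>)^2 * ( \<bar>u x\<bar> powr 2 + \<bar>u x\<bar> powr 10) \<partial>lebesgue)"
        by (rule integral_mono) (use Aint[OF xi] uf(2,3) ptw[OF xi] in auto)
      also have "\<dots> = (Mx \<xi>)^2 * Iu" unfolding Iu_def by simp
      also have "\<dots> \<le> M1^2 * Iu" using MM Iu0 by (intro mult_right_mono) auto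
      finally have le: "(\<integral>x. \<bar>A_op u \<alpha> p \<xi> x\<bar> powr 2 \<partial>lebesgue) \<le> M1^2 * Iu" .
      show ?thesis unfolding Lp_norm_def
        by (rule powr_mono2) (use le integral_nonneg_powr in auto)
    qed
  qed
qed

theorem lemmaC1:
  assumes "CARD('n::finite) \<in> {3, 4, 5}"
  shows "\<exists>\<delta>>0. \<forall>\<alpha> p.
           \<alpha> \<in> {real CARD('n) - 2 - \<delta> .. real CARD('n) - 2 + \<delta>} \<and> p \<in> {2 .. 2 + \<delta>} \<longrightarrow>
           (\<forall>u :: real^'n \<Rightarrow> real. u \<in> Xd \<longrightarrow>
              bounded_linear_X_L2rad (V_op u \<alpha> p) \<and> bounded_linear_X_L2rad (A_op u \<alpha> p))"
proof (intro exI[of _ "1/10"] conjI allI impI)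
  show "(0::real) < 1/10" by simp
  fix \<alpha> p :: real and u :: "real^'n \<Rightarrow> real"
  assume ap: "\<alpha> \<in> {real CARD('n) - 2 - 1/10 .. real CARD('n) - 2 + 1/10} \<and> p \<in> {2 .. 2 + 1/10}"
    and u: "u \<in> Xd"
  have d: "3 \<le> real CARD('n)" "real CARD('n) \<le> 5" using assms by auto
  have a0: "0 < \<alpha>" using ap d by auto
  have a1: "4/3*\<alpha> < real CARD('n)" using ap d by auto
  have p: "2 \<le> p" "p \<le> 9/4" "p \<le> 5/2" using ap by auto
  show "bounded_linear_X_L2rad (V_op u \<alpha> p)" by (rule V_main[OF assms a0 a1 p(1) p(3) u])
  show "bounded_linear_X_L2rad (A_op u \<alpha> p)" by (rule A_main[OF assms a0 a1 p(1) p(2) u])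
qed

end
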